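(* Let $n\ge 2$, $r>0$, $m\ge 1$, and let $g$ be polyharmonic of degree $m$ (harmonic if $m=1$), i.e. $g\in C^{2m}$ and $\Delta^m g=0$, in a domain of $\mathbb{R}^n$ containing $I_n=\{\bm{x}\in\mathbb{R}^n: |x_i|\le r,\ i=1,\dots,n\}$. Let $\varphi\in C^{2m}[0,r]$ satisfy $\varphi^{(k)}(0)=0$ for $k=0,1,\dots,2m-1$. Then, with $M(\bm{x})=\max_{1\le i\le n}|x_i|$, $$\int_{I_n}\varphi^{(2m)}(r-M)\,g\,d\lambda_n=2\sum_{s=0}^{m-1}\int_{D_n}\varphi^{(2s+1)}(r-M)\,\Delta^{m-s-1}g\,d\lambda_{n-1}.$$
   Context: $\Delta$ is the Laplacian and $\Delta^m$ its $m$-th iterate ($\Delta^0 g=g$); $\varphi^{(j)}$ is the $j$-th derivative of $\varphi$; $\lambda_n$ is Lebesgue measure on $\mathbb{R}^n$. For $1\le i<j\le n$, $D^{ij}_n=\{\bm{x}\in I_n : |x_k|\le |x_i|=|x_j| \text{ for all } k\ne i,j\}$, and $D_n=\bigcup_{1\le i<j\le n}D^{ij}_n$. On $D_n$, $\lambda_{n-1}$ denotes the measure obtained on each piece $D^{ij}_n$ by parametrizing it by the coordinates other than $x_i$ and taking $(n-1)$-dimensional Lebesgue measure in those coordinates (equivalently, $1/\sqrt2$ times the $(n-1)$-dimensional surface measure). *)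

theory Defs
  imports "HOL-Analysis.Analysis"
begin

definition partial :: "'n::finite \<Rightarrow> (real^'n \<Rightarrow> real) \<Rightarrow> real^'n \<Rightarrow> real" where
  "partial i f x = deriv (\<lambda>t. f (x + t *\<^sub>R axis i 1)) 0"

primrec Ck :: "nat \<Rightarrow> (real^'n::finite \<Rightarrow> real) \<Rightarrow> (real^'n) set \<Rightarrow> bool" where
  "Ck 0 f U = continuous_on U f"
| "Ck (Suc k) f U =
     (continuous_on U f \<and>
      (\<forall>i. \<forall>x\<in>U. (\<lambda>t. f (x + t *\<^sub>R axis i 1)) differentiable (at 0)) \<and>
      (\<forall>i. Ck k (partial i f) U))"

definition laplacian :: "(real^'n::finite \<Rightarrow> real) \<Rightarrow> real^'n \<Rightarrow> real" where
  "laplacian f = (\<lambda>x. \<Sum>i\<in>UNIV. partial i (partial i f) x)"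

definition Icube :: "real \<Rightarrow> (real^'n::finite) set" where
  "Icube r = {x. \<forall>i. \<bar>x$i\<bar> \<le> r}"

definition Mx :: "real^'n::finite \<Rightarrow> real" where
  "Mx x = Max (range (\<lambda>i. \<bar>x$i\<bar>))"

definition Dij :: "real \<Rightarrow> 'n::finite \<Rightarrow> 'n \<Rightarrow> (real^'n) set" where
  "Dij r i j = {x \<in> Icube r. \<bar>x$i\<bar> = \<bar>x$j\<bar> \<and> (\<forall>k. k \<noteq> i \<and> k \<noteq> j \<longrightarrow> \<bar>x$k\<bar> \<le> \<bar>x$i\<bar>)}"

definition lebesgue_minus :: "'n::finite \<Rightarrow> ('n \<Rightarrow> real) measure" where
  "lebesgue_minus i = PiM (UNIV - {i}) (\<lambda>_. lborel)"

text \<open>Point of the sheet x_i = \<sigma> x_j of D^{ij} with coordinates y (other than x_i).\<close>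
definition lift :: "'n::finite \<Rightarrow> 'n \<Rightarrow> real \<Rightarrow> ('n \<Rightarrow> real) \<Rightarrow> real^'n" where
  "lift i j \<sigma> y = (\<chi> k. if k = i then \<sigma> * y j else y k)"

text \<open>Integral over D^{ij}_n w.r.t. lambda_{n-1}: parametrized by the coordinates other than x_i;
  D^{ij} consists of the two sheets x_i = x_j and x_i = -x_j.\<close>
definition integral_Dij :: "real \<Rightarrow> 'n::finite \<Rightarrow> 'n \<Rightarrow> (real^'n \<Rightarrow> real) \<Rightarrow> real" where
  "integral_Dij r i j h =
     (\<Sum>\<sigma>\<in>{-1, 1::real}.
        set_lebesgue_integral (lebesgue_minus i)
          {y \<in> space (lebesgue_minus i). lift i j \<sigma> y \<in> Dij r i j}
          (\<lambda>y. h (lift i j \<sigma> y)))"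

text \<open>Integral over D_n = union of D^{ij}_n, i<j (the pieces overlap only in null sets).\<close>
definition integral_Dn :: "real \<Rightarrow> (real^'n::{finite,linorder} \<Rightarrow> real) \<Rightarrow> real" where
  "integral_Dn r h = (\<Sum>i\<in>UNIV. \<Sum>j\<in>{j. i < j}. integral_Dij r i j h)"

end

theory Submission
  imports Defs
begin


definition vecf :: "('n::finite \<Rightarrow> real) \<Rightarrow> real^'n" where "vecf y = (\<chi> l. y l)"

lemma vecf_nth[simp]: "vecf y $ l = y l" by (simp add: vecf_def)

lemma measurable_vec[measurable]:
  assumes "\<And>l. (\<lambda>x. f x l) \<in> borel_measurable M"
  shows "(\<lambda>x. vecf (f x) :: real^'n::finite) \<in> borel_measurable M"
proof (subst borel_measurable_euclidean_space, intro ballI)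
  fix b :: "real^'n" assume "b \<in> Basis"
  then obtain i where b: "b = axis i 1" by (auto simp: Basis_vec_def)
  show "(\<lambda>x. vecf (f x) \<bullet> b) \<in> borel_measurable M"
    using assms[of i] by (simp add: b inner_axis)
qed

lemma lborel_vec: "(lborel :: (real^'n::finite) measure) = distr (PiM UNIV (\<lambda>_::'n. lborel)) borel vecf"
proof (rule lborel_eqI)
  interpret product_sigma_finite "\<lambda>_::'n. lborel :: real measure" by standard
  fix l u :: "real^'n" assume lu: "\<And>b. b \<in> Basis \<Longrightarrow> l \<bullet> b \<le> u \<bullet> b"
  have lu': "l$i \<le> u$i" for i using lu[of "axis i 1"] by (auto simp: Basis_vec_def inner_axis)
  have vm: "vecf \<in> PiM UNIV (\<lambda>_::'n. lborel) \<rightarrow>\<^sub>M borel"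
    by (rule measurable_vec) simp
  have "vecf -` box l u \<inter> space (PiM UNIV (\<lambda>_::'n. lborel)) = PiE UNIV (\<lambda>i. {l$i<..<u$i})"
    by (auto simp: mem_box_cart space_PiM PiE_def Pi_def extensional_def)
  then have "emeasure (distr (PiM UNIV (\<lambda>_::'n. lborel)) borel vecf) (box l u) = (\<Prod>i\<in>UNIV. emeasure lborel {l$i<..<u$i})"
    using vm by (simp add: emeasure_distr emeasure_PiM)
  also have "\<dots> = (\<Prod>i\<in>UNIV. ennreal (u$i - l$i))"
  proof (intro prod.cong refl)
    fix i show "emeasure lborel {l$i<..<u$i} = ennreal (u$i - l$i)"
    proof -
      have "l$i \<le> u$i" using lu[of "axis i 1"] by (auto simp: Basis_vec_def inner_axis)
      then show ?thesis by simp
    qed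
  qed
  also have "\<dots> = ennreal (\<Prod>i\<in>UNIV. (u$i - l$i))"
    using lu' by (subst prod_ennreal) auto
  also have "(\<Prod>i\<in>UNIV. (u$i - l$i)) = (\<Prod>b\<in>Basis. (u - l) \<bullet> b)"
  proof -
    have B: "(Basis :: (real^'n) set) = range (\<lambda>i. axis i 1)" by (auto simp: Basis_vec_def)
    show ?thesis unfolding B
    by (subst prod.reindex) (auto simp: inj_on_def axis_eq_axis inner_axis)
  qed
  finally show "emeasure (distr (PiM UNIV (\<lambda>_::'n. lborel)) borel vecf) (box l u) = (\<Prod>b\<in>Basis. (u - l) \<bullet> b)" .
qed simp

lemma (in product_sigma_finite) product_integrable_insert:
  fixes f :: "_ \<Rightarrow> real"
  assumes I: "finite I" "i \<notin> I"
    and f: "integrable (Pi\<^sub>M (insert i I) M) f"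
  shows "integrable (Pi\<^sub>M I M) (\<lambda>x. \<integral>y. f (x(i:=y)) \<partial>M i)"
proof -
  interpret I: finite_product_sigma_finite M I by standard fact
  interpret J: finite_product_sigma_finite M "{i}" by standard simp
  interpret P: pair_sigma_finite "Pi\<^sub>M I M" "Pi\<^sub>M {i} M" ..
  have IJ: "I \<inter> {i} = {}" using I by auto
  have f2: "integrable (Pi\<^sub>M (I \<union> {i}) M) f" using f by simp
  have f_int: "integrable (Pi\<^sub>M I M \<Otimes>\<^sub>M Pi\<^sub>M {i} M) (\<lambda>x. f (merge I {i} x))"
    by (rule integrable_distr[OF measurable_merge]) (subst distr_merge[OF IJ I(1)], simp_all add: f)
  have int1: "integrable (Pi\<^sub>M I M) (\<lambda>x. \<integral>y. f (merge I {i} (x,y)) \<partial>Pi\<^sub>M {i} M)"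
    using P.integrable_fst'[OF f_int] by simp
  have eq: "(\<integral> y. f (merge I {i} (x,y)) \<partial>Pi\<^sub>M {i} M) = (\<integral>y. f (x(i := y)) \<partial>M i)"
    if x: "x \<in> space (Pi\<^sub>M I M)" for x
  proof -
    have f_borel: "f \<in> borel_measurable (Pi\<^sub>M (insert i I) M)"
      using f by auto
    have m: "(\<lambda>y. f (x(i := y))) \<in> borel_measurable (M i)"
      using measurable_comp[OF measurable_component_update f_borel, OF x \<open>i \<notin> I\<close>]
      unfolding comp_def .
    have "(\<integral> y. f (merge I {i} (x,y)) \<partial>Pi\<^sub>M {i} M) = (\<integral> xa. f (x(i := xa i)) \<partial>Pi\<^sub>M {i} M)"
      using x I by (intro Bochner_Integration.integral_cong refl arg_cong[where f=f]) (auto simp: merge_def space_PiM extensional_def PiE_def fun_eq_iff)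
    also have "\<dots> = (\<integral>y. f (x(i := y)) \<partial>M i)"
      using product_integral_singleton[OF m] .
    finally show ?thesis by simp
  qed
  show ?thesis using int1 Bochner_Integration.integrable_cong[OF refl, of "Pi\<^sub>M I M", OF eq] by simp
qed

abbreviation PP :: "('n::finite \<Rightarrow> real) measure" where "PP \<equiv> PiM UNIV (\<lambda>_. lborel)"

lemma psf: "product_sigma_finite (\<lambda>_::'n. lborel :: real measure)"
  by (simp add: product_sigma_finite_def lborel.sigma_finite_measure_axioms)

lemma measurable_vec_PP[measurable]: "vecf \<in> (PP::('n::finite \<Rightarrow> real) measure) \<rightarrow>\<^sub>M borel"
  by (rule measurable_vec) simp

lemma fub:
  fixes F :: "real^'n::finite \<Rightarrow> real"
  assumes "integrable lborel F"
  shows "integral\<^sup>L lborel F = (\<integral>y. (\<integral>t. F (vecf (y(k:=t))) \<partial>lborel) \<partial>lebesgue_minus k)"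
    and "integrable (lebesgue_minus k) (\<lambda>y. \<integral>t. F (vecf (y(k:=t))) \<partial>lborel)"
proof -
  interpret product_sigma_finite "\<lambda>_::'n. lborel :: real measure" by (rule psf)
  have Fm: "F \<in> borel_measurable borel" using assms by (simp add: borel_measurable_integrable)
  have ip: "integrable PP (\<lambda>y. F (vecf y))"
    using assms by (subst (asm) lborel_vec) (simp add: integrable_distr_eq Fm)
  have U: "(UNIV::'n set) = insert k (UNIV - {k})" by auto
  have ip2: "integrable (PiM (insert k (UNIV - {k})) (\<lambda>_. lborel)) (\<lambda>y. F (vecf y))"
    using ip U by metis
  have "integral\<^sup>L lborel F = integral\<^sup>L PP (\<lambda>y. F (vecf y))"
    by (subst lborel_vec) (simp add: integral_distr Fm)
  also have "\<dots> = integral\<^sup>L (PiM (insert k (UNIV - {k})) (\<lambda>_. lborel)) (\<lambda>y. F (vecf y))"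
    using U by metis
  also have "\<dots> = (\<integral>y. (\<integral>t. F (vecf (y(k:=t))) \<partial>lborel) \<partial>lebesgue_minus k)"
    unfolding lebesgue_minus_def by (rule product_integral_insert[OF _ _ ip2]) auto
  finally show "integral\<^sup>L lborel F = (\<integral>y. (\<integral>t. F (vecf (y(k:=t))) \<partial>lborel) \<partial>lebesgue_minus k)" .
  show "integrable (lebesgue_minus k) (\<lambda>y. \<integral>t. F (vecf (y(k:=t))) \<partial>lborel)"
    unfolding lebesgue_minus_def by (rule product_integrable_insert[OF _ _ ip2]) auto
qed


lemma comp_minus_within:
  assumes d: "\<forall>s\<in>{0..r}. (f has_real_derivative f' s) (at s within {0..r})"
    and t: "t \<in> {c..r}" and c: "0 \<le> c"
  shows "((\<lambda>t. f (r - t)) has_real_derivative - f' (r - t)) (at t within {c..r})"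
proof -
  have s: "(\<lambda>t. r - t) ` {c..r} \<subseteq> {0..r}" using c by auto
  have "r - t \<in> {0..r}" using t c by auto
  then have "(f has_real_derivative f' (r - t)) (at (r - t) within ((\<lambda>t. r - t) ` {c..r}))"
    using d DERIV_subset[OF _ s] by blast
  moreover have "((\<lambda>t. r - t) has_real_derivative -1) (at t within {c..r})"
    by (auto intro!: derivative_eq_intros)
  ultimately have "(f \<circ> (\<lambda>t. r - t) has_real_derivative f' (r-t) * -1) (at t within {c..r})"
    by (rule DERIV_image_chain)
  then show ?thesis by (simp add: o_def)
qed

lemma comp_plus_within:
  assumes d: "\<forall>s\<in>{0..r}. (f has_real_derivative f' s) (at s within {0..r})"
    and t: "t \<in> {-r..-c}" and c: "0 \<le> c"
  shows "((\<lambda>t. f (r + t)) has_real_derivative f' (r + t)) (at t within {-r..-c})"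
proof -
  have s: "(\<lambda>t. r + t) ` {-r..-c} \<subseteq> {0..r}" using c by auto
  have "r + t \<in> {0..r}" using t c by auto
  then have "(f has_real_derivative f' (r + t)) (at (r + t) within ((\<lambda>t. r + t) ` {-r..-c}))"
    using d DERIV_subset[OF _ s] by blast
  moreover have "((\<lambda>t. r + t) has_real_derivative 1) (at t within {-r..-c})"
    by (auto intro!: derivative_eq_intros)
  ultimately have "(f \<circ> (\<lambda>t. r + t) has_real_derivative f' (r+t) * 1) (at t within {-r..-c})"
    by (rule DERIV_image_chain)
  then show ?thesis by (simp add: o_def)
qed

lemma oneD:
  fixes \<psi>0 \<psi>1 \<psi>2 h h1 h2 :: "real \<Rightarrow> real" and r c :: real
  assumes c: "0 \<le> c" "c \<le> r"
  and d0: "\<forall>t\<in>{0..r}. (\<psi>0 has_real_derivative \<psi>1 t) (at t within {0..r})"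
  and d1: "\<forall>t\<in>{0..r}. (\<psi>1 has_real_derivative \<psi>2 t) (at t within {0..r})"
  and c2: "continuous_on {0..r} \<psi>2"
  and z: "\<psi>0 0 = 0" "\<psi>1 0 = 0"
  and dh: "\<forall>t\<in>{-r..r}. (h has_real_derivative h1 t) (at t)"
  and dh1: "\<forall>t\<in>{-r..r}. (h1 has_real_derivative h2 t) (at t)"
  and ch2: "continuous_on {-r..r} h2"
  shows "((\<lambda>t. \<psi>0 (r - max \<bar>t\<bar> c) * h2 t) has_integral
           (integral {-r..r} (\<lambda>t. if c < \<bar>t\<bar> then \<psi>2 (r - \<bar>t\<bar>) * h t else 0) - \<psi>1 (r-c) * (h c + h (-c)))) {-r..r}"
    and "(\<lambda>t. if c < \<bar>t\<bar> then \<psi>2 (r - \<bar>t\<bar>) * h t else 0) integrable_on {-r..r}"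
proof -
  define A where "A = (\<lambda>t. \<psi>0 (r - max \<bar>t\<bar> c) * h2 t)"
  define B where "B = (\<lambda>t. if c < \<bar>t\<bar> then \<psi>2 (r - \<bar>t\<bar>) * h t else 0)"
  have cp0: "continuous_on {0..r} \<psi>0" using d0 by (intro DERIV_continuous_on) auto
  have cp1: "continuous_on {0..r} \<psi>1" using d1 by (intro DERIV_continuous_on) auto
  have ch: "continuous_on {-r..r} h" using dh by (intro DERIV_continuous_on[where D=h1]) (auto intro: has_field_derivative_at_within)
  have ch1: "continuous_on {-r..r} h1" using dh1 by (intro DERIV_continuous_on[where D=h2]) (auto intro: has_field_derivative_at_within)
  have sub1: "{c..r} \<subseteq> {-r..r}" "{-r..-c} \<subseteq> {-r..r}" "{-c..c} \<subseteq> {-r..r}" using c by auto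
  define K1 where "K1 = (\<lambda>t. \<psi>0 (r - t) * h1 t + \<psi>1 (r - t) * h t)"
  have "((\<lambda>t. \<psi>0 (r - t) * h2 t - \<psi>2 (r - t) * h t) has_integral (K1 r - K1 c)) {c..r}"
  proof (rule fundamental_theorem_of_calculus[OF c(2)])
    fix t assume t: "t \<in> {c..r}"
    have tt: "t \<in> {-r..r}" using t c by auto
    have a: "((\<lambda>t. \<psi>0 (r - t)) has_real_derivative - \<psi>1 (r - t)) (at t within {c..r})"
      using comp_minus_within[OF d0 t c(1)] .
    have b: "((\<lambda>t. \<psi>1 (r - t)) has_real_derivative - \<psi>2 (r - t)) (at t within {c..r})"
      using comp_minus_within[OF d1 t c(1)] .
    have e: "(h has_real_derivative h1 t) (at t within {c..r})" using dh tt has_field_derivative_at_within by blast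
    have f: "(h1 has_real_derivative h2 t) (at t within {c..r})" using dh1 tt has_field_derivative_at_within by blast
    have "(K1 has_real_derivative (\<psi>0 (r - t) * h2 t - \<psi>2 (r - t) * h t)) (at t within {c..r})"
      unfolding K1_def by (rule DERIV_cong[OF DERIV_add[OF DERIV_mult[OF a f] DERIV_mult[OF b e]]]) (simp add: algebra_simps)
    then show "(K1 has_vector_derivative (\<psi>0 (r - t) * h2 t - \<psi>2 (r - t) * h t)) (at t within {c..r})"
      by (simp add: has_real_derivative_iff_has_vector_derivative)
  qed
  moreover have "K1 r = 0" by (simp add: K1_def z)
  ultimately have R1: "((\<lambda>t. \<psi>0 (r - t) * h2 t - \<psi>2 (r - t) * h t) has_integral (- K1 c)) {c..r}" by simp
  have cA1: "continuous_on {c..r} (\<lambda>t. \<psi>0 (r - t) * h2 t)"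
    using c by (intro continuous_intros continuous_on_compose2[OF cp0] continuous_on_subset[OF ch2 sub1(1)]) auto
  have R2: "((\<lambda>t. \<psi>0 (r - t) * h2 t) has_integral integral {c..r} (\<lambda>t. \<psi>0 (r - t) * h2 t)) {c..r}"
    using integrable_continuous_interval[OF cA1] by (simp add: has_integral_integral)
  have R3: "((\<lambda>t. \<psi>2 (r - t) * h t) has_integral (integral {c..r} (\<lambda>t. \<psi>0 (r - t) * h2 t) + K1 c)) {c..r}"
    using has_integral_diff[OF R2 R1] by simp
  have RA: "(A has_integral integral {c..r} (\<lambda>t. \<psi>0 (r - t) * h2 t)) {c..r}"
    by (rule has_integral_spike_finite[OF finite.emptyI _ R2]) (use c in \<open>auto simp: A_def max_def\<close>)
  have RB: "(B has_integral (integral {c..r} (\<lambda>t. \<psi>0 (r - t) * h2 t) + K1 c)) {c..r}"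
    by (rule has_integral_spike_finite[of "{c}", OF _ _ R3]) (use c in \<open>auto simp: B_def\<close>)
  define K3 where "K3 = (\<lambda>t. \<psi>0 (r + t) * h1 t - \<psi>1 (r + t) * h t)"
  have "((\<lambda>t. \<psi>0 (r + t) * h2 t - \<psi>2 (r + t) * h t) has_integral (K3 (-c) - K3 (-r))) {-r..-c}"
  proof (rule fundamental_theorem_of_calculus)
    show "- r \<le> - c" using c by simp
    fix t assume t: "t \<in> {-r..-c}"
    have tt: "t \<in> {-r..r}" using t c by auto
    have a: "((\<lambda>t. \<psi>0 (r + t)) has_real_derivative \<psi>1 (r + t)) (at t within {-r..-c})"
      using comp_plus_within[OF d0 t c(1)] .
    have b: "((\<lambda>t. \<psi>1 (r + t)) has_real_derivative \<psi>2 (r + t)) (at t within {-r..-c})"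
      using comp_plus_within[OF d1 t c(1)] .
    have e: "(h has_real_derivative h1 t) (at t within {-r..-c})" using dh tt has_field_derivative_at_within by blast
    have f: "(h1 has_real_derivative h2 t) (at t within {-r..-c})" using dh1 tt has_field_derivative_at_within by blast
    have "(K3 has_real_derivative (\<psi>0 (r + t) * h2 t - \<psi>2 (r + t) * h t)) (at t within {-r..-c})"
      unfolding K3_def by (rule DERIV_cong[OF DERIV_diff[OF DERIV_mult[OF a f] DERIV_mult[OF b e]]]) (simp add: algebra_simps)
    then show "(K3 has_vector_derivative (\<psi>0 (r + t) * h2 t - \<psi>2 (r + t) * h t)) (at t within {-r..-c})"
      by (simp add: has_real_derivative_iff_has_vector_derivative)
  qed
  moreover have "K3 (-r) = 0" by (simp add: K3_def z)
  ultimately have L1: "((\<lambda>t. \<psi>0 (r + t) * h2 t - \<psi>2 (r + t) * h t) has_integral (K3 (-c))) {-r..-c}" by simp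
  have cA3: "continuous_on {-r..-c} (\<lambda>t. \<psi>0 (r + t) * h2 t)"
    using c by (intro continuous_intros continuous_on_compose2[OF cp0] continuous_on_subset[OF ch2 sub1(2)]) auto
  have L2: "((\<lambda>t. \<psi>0 (r + t) * h2 t) has_integral integral {-r..-c} (\<lambda>t. \<psi>0 (r + t) * h2 t)) {-r..-c}"
    using integrable_continuous_interval[OF cA3] by (simp add: has_integral_integral)
  have L3: "((\<lambda>t. \<psi>2 (r + t) * h t) has_integral (integral {-r..-c} (\<lambda>t. \<psi>0 (r + t) * h2 t) - K3 (-c))) {-r..-c}"
    using has_integral_diff[OF L2 L1] by simp
  have LA: "(A has_integral integral {-r..-c} (\<lambda>t. \<psi>0 (r + t) * h2 t)) {-r..-c}"
    by (rule has_integral_spike_finite[of "{-c}", OF _ _ L2]) (use c in \<open>auto simp: A_def max_def\<close>)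
  have LB: "(B has_integral (integral {-r..-c} (\<lambda>t. \<psi>0 (r + t) * h2 t) - K3 (-c))) {-r..-c}"
    by (rule has_integral_spike_finite[of "{-c}", OF _ _ L3]) (use c in \<open>auto simp: B_def\<close>)
  have M1: "(h2 has_integral (h1 c - h1 (-c))) {-c..c}"
  proof (rule fundamental_theorem_of_calculus)
    show "-c \<le> c" using c by simp
    fix t assume t: "t \<in> {-c..c}"
    then have "t \<in> {-r..r}" using c by auto
    then show "(h1 has_vector_derivative h2 t) (at t within {-c..c})"
      using dh1 by (auto simp: has_real_derivative_iff_has_vector_derivative[symmetric] intro: has_field_derivative_at_within)
  qed
  have MA: "(A has_integral (\<psi>0 (r - c) * (h1 c - h1 (-c)))) {-c..c}"
    by (rule has_integral_spike_finite[OF finite.emptyI _ has_integral_mult_right[OF M1]]) (auto simp: A_def max_def)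
  have MB: "(B has_integral 0) {-c..c}"
    by (rule has_integral_spike_finite[OF finite.emptyI _ has_integral_0]) (auto simp: B_def)
  have A1: "(A has_integral (integral {-r..-c} (\<lambda>t. \<psi>0 (r + t) * h2 t) + \<psi>0 (r - c) * (h1 c - h1 (-c)))) {-r..c}"
    by (rule has_integral_combine[OF _ _ LA MA]) (use c in auto)
  have A2: "(A has_integral (integral {-r..-c} (\<lambda>t. \<psi>0 (r + t) * h2 t) + \<psi>0 (r - c) * (h1 c - h1 (-c)) + integral {c..r} (\<lambda>t. \<psi>0 (r - t) * h2 t))) {-r..r}"
    by (rule has_integral_combine[OF _ _ A1 RA]) (use c in auto)
  have B1: "(B has_integral (integral {-r..-c} (\<lambda>t. \<psi>0 (r + t) * h2 t) - K3 (-c) + 0)) {-r..c}"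
    by (rule has_integral_combine[OF _ _ LB MB]) (use c in auto)
  have B2: "(B has_integral (integral {-r..-c} (\<lambda>t. \<psi>0 (r + t) * h2 t) - K3 (-c) + 0 + (integral {c..r} (\<lambda>t. \<psi>0 (r - t) * h2 t) + K1 c))) {-r..r}"
    by (rule has_integral_combine[OF _ _ B1 RB]) (use c in auto)
  show "B integrable_on {-r..r}" using B2 by blast
  have E: "integral {-r..-c} (\<lambda>t. \<psi>0 (r + t) * h2 t) + \<psi>0 (r - c) * (h1 c - h1 (-c)) + integral {c..r} (\<lambda>t. \<psi>0 (r - t) * h2 t)
     = integral {-r..r} B - \<psi>1 (r-c) * (h c + h (-c))"
    using integral_unique[OF B2] by (simp add: K1_def K3_def algebra_simps)
  show "(A has_integral (integral {-r..r} B - \<psi>1 (r-c) * (h c + h (-c)))) {-r..r}"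
    using A2 unfolding E .
qed


lemma real_diff_field: "(f::real\<Rightarrow>real) differentiable at x \<longleftrightarrow> f field_differentiable at x"
  using DERIV_deriv_iff_real_differentiable DERIV_deriv_iff_field_differentiable by blast

lemma ev_line_in:
  fixes x :: "real^'n::finite"
  assumes "open U" "x \<in> U"
  shows "eventually (\<lambda>t. x + t *\<^sub>R axis i 1 \<in> U) (nhds 0)"
proof -
  obtain d where d: "d > 0" "ball x d \<subseteq> U" using assms openE by blast
  show ?thesis unfolding eventually_nhds_metric
  proof (intro exI[of _ d] conjI allI impI)
    fix t :: real assume "dist t 0 < d"
    then have "dist x (x + t *\<^sub>R axis i 1) < d" by (simp add: dist_norm)
    then show "x + t *\<^sub>R axis i 1 \<in> U" using d by auto
  qed (use d in auto)
qed

lemma Ck_cong: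
  assumes "open U" "\<forall>x\<in>U. f x = g x" "Ck k f U"
  shows "Ck k g U"
  using assms(2,3)
proof (induction k arbitrary: f g)
  case 0 then show ?case using continuous_on_cong by fastforce
next
  case (Suc k)
  have ev: "eventually (\<lambda>t. f (x + t *\<^sub>R axis i 1) = g (x + t *\<^sub>R axis i 1)) (nhds 0)" if "x \<in> U" for x i
    using ev_line_in[OF assms(1) that, of i] Suc.prems(1) by (auto elim: eventually_mono)
  have c: "continuous_on U g" using Suc.prems continuous_on_cong by fastforce
  have d: "\<forall>i. \<forall>x\<in>U. (\<lambda>t. g (x + t *\<^sub>R axis i 1)) differentiable (at 0)"
  proof (intro allI ballI)
    fix i x assume x: "x \<in> U"
    have "(\<lambda>t. f (x + t *\<^sub>R axis i 1)) differentiable (at 0)" using Suc.prems(2) x by simp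
    then have "(\<lambda>t. f (x + t *\<^sub>R axis i 1)) field_differentiable (at 0)" by (simp add: real_diff_field)
    then obtain D where "((\<lambda>t. f (x + t *\<^sub>R axis i 1)) has_field_derivative D) (at 0)"
      unfolding field_differentiable_def by blast
    then have "((\<lambda>t. g (x + t *\<^sub>R axis i 1)) has_field_derivative D) (at 0)"
      using DERIV_cong_ev[OF refl ev[OF x, of i] refl] by blast
    then have "(\<lambda>t. g (x + t *\<^sub>R axis i 1)) field_differentiable (at 0)"
      unfolding field_differentiable_def by blast
    then show "(\<lambda>t. g (x + t *\<^sub>R axis i 1)) differentiable (at 0)" by (simp add: real_diff_field)
  qed
  have p: "\<forall>x\<in>U. partial i f x = partial i g x" for i
    unfolding partial_def using ev by (auto intro!: deriv_cong_ev)
  have "Ck k (partial i g) U" for i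
    using Suc.IH[OF p] Suc.prems(2) by simp
  then show ?case using c d by simp
qed

lemma Ck_Suc_mono: "Ck (Suc k) f U \<Longrightarrow> Ck k f U"
  by (induction k arbitrary: f) auto

lemma Ck_mono: "Ck (k + j) f U \<Longrightarrow> Ck k f U"
proof (induction j)
  case (Suc j)
  then show ?case using Ck_Suc_mono[of "k+j" f U] by (metis add_Suc_right)
qed simp

lemma Ck_zero: "Ck k (\<lambda>x. 0) U"
proof (induction k)
  case (Suc k)
  have "partial i (\<lambda>x. 0::real) = (\<lambda>x. 0)" for i :: 'a
    by (simp add: partial_def fun_eq_iff)
  then show ?case using Suc by simp
qed simp

lemma Ck_add:
  assumes "open U" "Ck k f U" "Ck k g U"
  shows "Ck k (\<lambda>x. f x + g x) U"
  using assms(2,3)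
proof (induction k arbitrary: f g)
  case 0 then show ?case by (auto intro: continuous_intros)
next
  case (Suc k)
  have p: "\<forall>x\<in>U. partial i f x + partial i g x = partial i (\<lambda>x. f x + g x) x" for i
  proof
    fix x assume "x \<in> U"
    then have "(\<lambda>t. f (x + t *\<^sub>R axis i 1)) field_differentiable (at 0)"
      "(\<lambda>t. g (x + t *\<^sub>R axis i 1)) field_differentiable (at 0)"
      using Suc.prems by (auto simp: real_diff_field[symmetric])
    then show "partial i f x + partial i g x = partial i (\<lambda>x. f x + g x) x"
      unfolding partial_def by simp
  qed
  have "Ck k (partial i (\<lambda>x. f x + g x)) U" for i
    using Ck_cong[OF assms(1) p Suc.IH] Suc.prems by simp
  then show ?case using Suc.prems by (auto intro: continuous_intros differentiable_add)
qed

lemma Ck_sum: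
  assumes "open U" "finite S" "\<And>l. l \<in> S \<Longrightarrow> Ck k (f l) U"
  shows "Ck k (\<lambda>x. \<Sum>l\<in>S. f l x) U"
  using assms(2,3)
proof (induction S rule: finite_induct)
  case empty then show ?case by (simp add: Ck_zero)
next
  case (insert a S)
  then show ?case using Ck_add[OF assms(1), of k "f a" "\<lambda>x. \<Sum>l\<in>S. f l x"] by simp
qed

lemma Ck_partial: "Ck (Suc k) f U \<Longrightarrow> Ck k (partial i f) U" by simp

lemma Ck_lap:
  assumes "open U" "Ck (Suc (Suc k)) f U"
  shows "Ck k (laplacian f) U"
  unfolding laplacian_def
  by (rule Ck_sum[OF assms(1)]) (use assms(2) in auto)

lemma Ck_lap_pow:
  assumes "open U" "Ck (2*m) g U" "s \<le> m"
  shows "Ck (2*(m-s)) ((laplacian ^^ s) g) U"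
  using assms(3)
proof (induction s)
  case 0 then show ?case using assms by simp
next
  case (Suc s)
  have "2*(m-s) = Suc (Suc (2*(m - Suc s)))" using Suc.prems by simp
  then show ?case using Ck_lap[OF assms(1)] Suc by simp
qed

lemma line_deriv:
  assumes "\<forall>x\<in>U. (\<lambda>t. f (x + t *\<^sub>R axis i 1)) differentiable (at 0)"
    and "p + t0 *\<^sub>R axis i 1 \<in> U"
  shows "((\<lambda>t. f (p + t *\<^sub>R axis i 1)) has_real_derivative partial i f (p + t0 *\<^sub>R axis i 1)) (at t0)"
proof -
  define q where "q = p + t0 *\<^sub>R axis i 1"
  define g where "g = (\<lambda>s. f (q + s *\<^sub>R axis i 1))"
  have "g differentiable (at 0)" using assms unfolding g_def q_def by blast
  then have "(g has_real_derivative partial i f q) (at 0)"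
    unfolding partial_def g_def[symmetric] by (simp add: DERIV_deriv_iff_real_differentiable)
  then have "(g has_real_derivative partial i f q) (at (t0 - t0))" by simp
  then have "((\<lambda>t. g (t - t0)) has_real_derivative partial i f q * 1) (at t0)"
    by (intro DERIV_chain2[where f=g]) (auto intro!: derivative_eq_intros)
  moreover have "g (t - t0) = f (p + t *\<^sub>R axis i 1)" for t
    by (simp add: g_def q_def algebra_simps)
  ultimately show ?thesis by (simp add: q_def)
qed


lemma Icube_cbox: "Icube r = cbox (\<chi> i. -r) (\<chi> i. r :: real^'n::finite)"
  by (auto simp: Icube_def mem_box_cart abs_le_iff) (smt (verit))+

lemma compact_Icube: "compact (Icube r)" by (simp add: Icube_cbox)
lemma closed_Icube: "closed (Icube r)" by (simp add: Icube_cbox closed_cbox)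
lemma Icube_sets[measurable]: "Icube r \<in> sets borel" by (simp add: closed_Icube)

lemma E_sets[measurable]: "{x::real^'n::finite. \<forall>l. l \<noteq> k \<longrightarrow> \<bar>x$l\<bar> < \<bar>x$k\<bar>} \<in> sets borel"
  by measurable

lemma Dij_sets[measurable]: "Dij r i j \<in> sets borel"
  unfolding Dij_def by measurable

lemma Mx_infnorm: "Mx x = infnorm x"
proof -
  have "{\<bar>x$i\<bar> |i. i\<in>UNIV} = range (\<lambda>i. \<bar>x$i\<bar>)" by auto
  then show ?thesis unfolding Mx_def infnorm_cart by (simp add: cSup_eq_Max)
qed

lemma continuous_Mx: "continuous_on S Mx"
  unfolding Mx_infnorm[abs_def] by (intro continuous_intros)

lemma Mx_ge: "\<bar>x$i\<bar> \<le> Mx x"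
  unfolding Mx_def by (rule Max_ge) auto

lemma Mx_cube:
  fixes x :: "real^'n::finite"
  assumes x: "x \<in> Icube r" shows "0 \<le> Mx x \<and> Mx x \<le> r"
proof -
  have "0 \<le> Mx x" using Mx_ge[of x undefined] by linarith
  moreover have "Mx x \<le> r" using x unfolding Mx_def Icube_def by (auto simp: Max_le_iff)
  ultimately show ?thesis by simp
qed

lemma cont_comp:
  fixes \<psi> :: "real \<Rightarrow> real" and q :: "real^'n::finite \<Rightarrow> real"
  assumes "continuous_on {0..r} \<psi>" "continuous_on (Icube r) q"
  shows "continuous_on (Icube r) (\<lambda>x::real^'n::finite. \<psi> (r - Mx x) * q x)"
proof -
  have "continuous_on (Icube r) (\<lambda>x. \<psi> (r - Mx x))"
    by (rule continuous_on_compose2[OF assms(1), of _ "\<lambda>x. r - Mx x"])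
       (auto intro!: continuous_intros continuous_Mx dest: Mx_cube)
  then show ?thesis using assms(2) by (rule continuous_on_mult)
qed

lemma int_cube:
  fixes F :: "real^'n::finite \<Rightarrow> real"
  assumes "continuous_on (Icube r) F" "A \<in> sets borel"
  shows "integrable lborel (\<lambda>x. indicator (Icube r \<inter> A) x * F x)"
proof -
  have "set_integrable lborel (Icube r) F"
    unfolding set_integrable_def by (rule borel_integrable_compact[OF compact_Icube assms(1)])
  then have "set_integrable lborel (Icube r \<inter> A) F"
    by (rule set_integrable_subset) (use assms(2) in auto)
  then show ?thesis by (simp add: set_integrable_def)
qed

definition am :: "'n::finite \<Rightarrow> ('n \<Rightarrow> real) \<Rightarrow> real" where
  "am k y = Max ((\<lambda>l. \<bar>y l\<bar>) ` (UNIV - {k}))"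

lemma other_ne:
  assumes "CARD('n::finite) \<ge> 2" shows "UNIV - {k::'n} \<noteq> {}"
proof
  assume "UNIV - {k} = {}"
  then have "(UNIV::'n set) = {k}" by auto
  then have "CARD('n) = card {k}" by (rule arg_cong)
  then have "CARD('n) = 1" by simp
  then show False using assms by simp
qed

lemma am_ge: "l \<noteq> k \<Longrightarrow> \<bar>y l\<bar> \<le> am k y"
  unfolding am_def by (rule Max_ge) auto

lemma am_le_iff: "CARD('n::finite) \<ge> 2 \<Longrightarrow> am k y \<le> c \<longleftrightarrow> (\<forall>l. l \<noteq> (k::'n) \<longrightarrow> \<bar>y l\<bar> \<le> c)"
  unfolding am_def using other_ne[of k] by (subst Max_le_iff) auto

lemma am_less_iff: "CARD('n::finite) \<ge> 2 \<Longrightarrow> am k y < c \<longleftrightarrow> (\<forall>l. l \<noteq> (k::'n) \<longrightarrow> \<bar>y l\<bar> < c)"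
  unfolding am_def using other_ne[of k] by (subst Max_less_iff) auto

lemma am_attained: "CARD('n::finite) \<ge> 2 \<Longrightarrow> \<exists>l. l \<noteq> (k::'n) \<and> \<bar>y l\<bar> = am k y"
proof -
  assume c: "CARD('n) \<ge> 2"
  have "am k y \<in> (\<lambda>l. \<bar>y l\<bar>) ` (UNIV - {k})"
    unfolding am_def using other_ne[OF c, of k] by (intro Max_in) auto
  then show ?thesis by auto
qed

lemma am_nonneg: "CARD('n::finite) \<ge> 2 \<Longrightarrow> 0 \<le> am (k::'n) y"
  using am_attained[of k y] by force

lemma Mx_upd:
  assumes "CARD('n::finite) \<ge> 2"
  shows "Mx (vecf (y(k:=t)) :: real^'n) = max \<bar>t\<bar> (am k y)"
proof -
  have "range (\<lambda>i. \<bar>vecf (y(k:=t)) $ i\<bar>) = insert \<bar>t\<bar> ((\<lambda>l. \<bar>y l\<bar>) ` (UNIV - {k}))"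
    by (auto simp: image_def)
  then show ?thesis unfolding Mx_def am_def using other_ne[OF assms, of k]
    by (simp add: Max_insert)
qed

lemma cube_upd:
  assumes "CARD('n::finite) \<ge> 2"
  shows "(vecf (y(k:=t)) :: real^'n) \<in> Icube r \<longleftrightarrow> \<bar>t\<bar> \<le> r \<and> am k y \<le> r"
  unfolding Icube_def using am_le_iff[OF assms, of k y r] by (auto split: if_splits)

lemma vec_upd_line: "vecf (y(k:=t)) = vecf (y(k:=0)) + t *\<^sub>R axis k (1::real)"
  by (auto simp: vec_eq_iff axis_def)

lemma inner_cube:
  fixes F :: "real^'n::finite \<Rightarrow> real"
  assumes "CARD('n::finite) \<ge> 2"
  shows "(\<integral>t. indicator (Icube r) (vecf (y(k:=t)) :: real^'n) * F (vecf (y(k:=t))) \<partial>lborel)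
     = indicator {y. am k y \<le> r} y * (\<integral>t. indicator {-r..r} t * F (vecf (y(k:=t))) \<partial>lborel)"
proof -
  have e: "indicator (Icube r) (vecf (y(k:=t)) :: real^'n) * F (vecf (y(k:=t))) =
        indicator {y. am k y \<le> r} y * (indicator {-r..r} t * F (vecf (y(k:=t))))" for t
    by (auto simp: indicator_def cube_upd[OF assms] abs_le_iff)
  have "(\<integral>t. indicator (Icube r) (vecf (y(k:=t)) :: real^'n) * F (vecf (y(k:=t))) \<partial>lborel)
     = (\<integral>t. indicator {y. am k y \<le> r} y * (indicator {-r..r} t * F (vecf (y(k:=t)))) \<partial>lborel)"
    by (rule Bochner_Integration.integral_cong[OF refl e])
  also have "\<dots> = indicator {y. am k y \<le> r} y * (\<integral>t. indicator {-r..r} t * F (vecf (y(k:=t))) \<partial>lborel)"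
    by (rule integral_mult_right_zero)
  finally show ?thesis .
qed

lemma lint_hk:
  assumes "continuous_on {a..b} g"
  shows "(\<integral>t. indicator {a..b} t * g t \<partial>lborel) = integral {a..b} (g::real\<Rightarrow>real)"
proof -
  have si: "set_integrable lborel {a..b} g"
    unfolding set_integrable_def by (rule borel_integrable_compact[OF compact_Icc assms])
  show ?thesis using set_borel_integral_eq_integral(2)[OF si] by (simp add: set_lebesgue_integral_def)
qed

lemma lint_hk_piece:
  fixes g :: "real \<Rightarrow> real"
  assumes "continuous_on {a..b} g"
  shows "(\<integral>t. indicator {a..b} t * (if c < \<bar>t\<bar> then g t else 0) \<partial>lborel)
       = integral {a..b} (\<lambda>t. if c < \<bar>t\<bar> then g t else (0::real))"
proof -
  have "set_integrable lborel {a..b} g"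
    unfolding set_integrable_def by (rule borel_integrable_compact[OF compact_Icc assms])
  then have si: "set_integrable lborel ({t. c < \<bar>t\<bar>} \<inter> {a..b}) g"
    by (rule set_integrable_subset) auto
  have "(\<integral>t. indicator {a..b} t * (if c < \<bar>t\<bar> then g t else 0) \<partial>lborel)
      = (LINT t : ({t. c < \<bar>t\<bar>} \<inter> {a..b}) | lborel. g t)"
    unfolding set_lebesgue_integral_def by (intro Bochner_Integration.integral_cong) (auto simp: indicator_def)
  also have "\<dots> = integral ({t. c < \<bar>t\<bar>} \<inter> {a..b}) g"
    using set_borel_integral_eq_integral(2)[OF si] .
  also have "\<dots> = integral {a..b} (\<lambda>t. if t \<in> {t. c < \<bar>t\<bar>} then g t else 0)"
    by (rule integral_restrict_Int[symmetric])
  finally show ?thesis by simp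
qed


definition Gk :: "real \<Rightarrow> (real\<Rightarrow>real) \<Rightarrow> (real^'n::finite \<Rightarrow> real) \<Rightarrow> 'n \<Rightarrow> ('n \<Rightarrow> real) \<Rightarrow> real" where
  "Gk r \<psi>1 h k y = indicator {y. am k y \<le> r} y * (\<psi>1 (r - am k y) * (h (vecf (y(k := am k y))) + h (vecf (y(k := - am k y)))))"

definition Ek :: "'n::finite \<Rightarrow> (real^'n) set" where "Ek k = {x. \<forall>l. l \<noteq> k \<longrightarrow> \<bar>x$l\<bar> < \<bar>x$k\<bar>}"

lemma Ek_sets[measurable]: "Ek k \<in> sets borel"
  unfolding Ek_def by (rule E_sets)

lemma cont_line:
  fixes F :: "real^'n::finite \<Rightarrow> real"
  assumes "CARD('n) \<ge> 2" "continuous_on (Icube r) F" "am k y \<le> r"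
  shows "continuous_on {-r..r} (\<lambda>t. F (vecf (y(k:=t))))"
proof (rule continuous_on_compose2[OF assms(2)])
  show "continuous_on {-r..r} (\<lambda>t. vecf (y(k:=t)) :: real^'n)"
    by (subst vec_upd_line) (intro continuous_intros)
  show "(\<lambda>t. vecf (y(k:=t))) ` {-r..r} \<subseteq> Icube r"
    using assms(3) by (auto simp: cube_upd[OF assms(1)] abs_le_iff)
qed

lemma step2:
  fixes h :: "real^'n::finite \<Rightarrow> real" and \<psi>0 \<psi>1 \<psi>2 :: "real \<Rightarrow> real"
  assumes card: "CARD('n) \<ge> 2" and r: "r > 0" and sub: "Icube r \<subseteq> U" and hC: "Ck 2 h U"
  and d0: "\<forall>t\<in>{0..r}. (\<psi>0 has_real_derivative \<psi>1 t) (at t within {0..r})"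
  and d1: "\<forall>t\<in>{0..r}. (\<psi>1 has_real_derivative \<psi>2 t) (at t within {0..r})"
  and c2: "continuous_on {0..r} \<psi>2"
  and z: "\<psi>0 0 = 0" "\<psi>1 0 = 0"
  shows "integrable (lebesgue_minus k) (Gk r \<psi>1 h k)"
    and "(LINT x:Icube r|lborel. \<psi>0 (r - Mx x) * partial k (partial k h) x)
          = (LINT x:(Icube r \<inter> Ek k)|lborel. \<psi>2 (r - Mx x) * h x) - integral\<^sup>L (lebesgue_minus k) (Gk r \<psi>1 h k)"
proof -
  have hC': "Ck (Suc (Suc 0)) h U" using hC by (simp add: numeral_2_eq_2)
  have ch: "continuous_on U h" and dh: "\<forall>i. \<forall>x\<in>U. (\<lambda>t. h (x + t *\<^sub>R axis i 1)) differentiable (at 0)"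
    and ch1: "continuous_on U (partial k h)"
    and dh1: "\<forall>i. \<forall>x\<in>U. (\<lambda>t. partial k h (x + t *\<^sub>R axis i 1)) differentiable (at 0)"
    and ch2: "continuous_on U (partial k (partial k h))"
    using hC' by auto
  define h2f where "h2f = partial k (partial k h)"
  have cp0: "continuous_on {0..r} \<psi>0" using d0 by (intro DERIV_continuous_on) auto
  have cp1: "continuous_on {0..r} \<psi>1" using d1 by (intro DERIV_continuous_on) auto
  have chI: "continuous_on (Icube r) h" using continuous_on_subset[OF ch sub] .
  have ch2I: "continuous_on (Icube r) h2f" using continuous_on_subset[OF ch2 sub] by (simp add: h2f_def)
  define F0 where "F0 = (\<lambda>x::real^'n. indicator (Icube r) x * (\<psi>0 (r - Mx x) * h2f x))"
  define F2 where "F2 = (\<lambda>x::real^'n. indicator (Icube r \<inter> Ek k) x * (\<psi>2 (r - Mx x) * h x))"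
  have cF0: "continuous_on (Icube r) (\<lambda>x. \<psi>0 (r - Mx x) * h2f x)" by (rule cont_comp[OF cp0 ch2I])
  have cF2: "continuous_on (Icube r) (\<lambda>x. \<psi>2 (r - Mx x) * h x)" by (rule cont_comp[OF c2 chI])
  have int0: "integrable lborel F0" unfolding F0_def using int_cube[OF cF0, of UNIV] by simp
  have int2: "integrable lborel F2" unfolding F2_def using int_cube[OF cF2 Ek_sets] by simp
  define I0 where "I0 = (\<lambda>y. \<integral>t. F0 (vecf (y(k:=t))) \<partial>lborel)"
  define I2 where "I2 = (\<lambda>y. \<integral>t. F2 (vecf (y(k:=t))) \<partial>lborel)"
  have I0: "I0 y = indicator {y. am k y \<le> r} y * integral {-r..r} (\<lambda>t. \<psi>0 (r - max \<bar>t\<bar> (am k y)) * h2f (vecf (y(k:=t))))" for y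
  proof -
    have "I0 y = indicator {y. am k y \<le> r} y * (\<integral>t. indicator {-r..r} t * (\<psi>0 (r - Mx (vecf (y(k:=t)))) * h2f (vecf (y(k:=t)))) \<partial>lborel)"
      unfolding I0_def F0_def by (rule inner_cube[OF card])
    also have "\<dots> = indicator {y. am k y \<le> r} y * integral {-r..r} (\<lambda>t. \<psi>0 (r - Mx (vecf (y(k:=t)))) * h2f (vecf (y(k:=t))))"
    proof (cases "am k y \<le> r")
      case True
      show ?thesis using lint_hk[OF cont_line[OF card cF0 True]] by simp
    qed simp
    finally show ?thesis by (simp add: Mx_upd[OF card])
  qed
  have I2: "I2 y = indicator {y. am k y \<le> r} y * integral {-r..r} (\<lambda>t. if am k y < \<bar>t\<bar> then \<psi>2 (r - \<bar>t\<bar>) * h (vecf (y(k:=t))) else 0)" for y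
  proof -
    have "I2 y = indicator {y. am k y \<le> r} y * (\<integral>t. indicator {-r..r} t * (indicator (Ek k) (vecf (y(k:=t))) * (\<psi>2 (r - Mx (vecf (y(k:=t)))) * h (vecf (y(k:=t))))) \<partial>lborel)"
      unfolding I2_def F2_def indicator_inter_arith mult.assoc by (rule inner_cube[OF card])
    also have "\<dots> = indicator {y. am k y \<le> r} y * integral {-r..r} (\<lambda>t. if am k y < \<bar>t\<bar> then \<psi>2 (r - \<bar>t\<bar>) * h (vecf (y(k:=t))) else 0)"
    proof (cases "am k y \<le> r")
      case True
      have cg: "continuous_on {-r..r} (\<lambda>t. \<psi>2 (r - \<bar>t\<bar>) * h (vecf (y(k:=t))))"
        using cont_line[OF card chI True]
        by (intro continuous_intros continuous_on_compose2[OF c2, of _ "\<lambda>t. r - \<bar>t\<bar>"]) auto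
      have e: "indicator {-r..r} t * (indicator (Ek k) (vecf (y(k:=t))) * (\<psi>2 (r - Mx (vecf (y(k:=t)))) * h (vecf (y(k:=t)))))
          = indicator {-r..r} t * (if am k y < \<bar>t\<bar> then \<psi>2 (r - \<bar>t\<bar>) * h (vecf (y(k:=t))) else 0)" for t
        using am_less_iff[OF card, of k y "\<bar>t\<bar>"] by (auto simp: Ek_def indicator_def Mx_upd[OF card])
      show ?thesis
        by (subst Bochner_Integration.integral_cong[OF refl e]) (simp add: lint_hk_piece[OF cg])
    qed simp
    finally show ?thesis .
  qed
  have G: "Gk r \<psi>1 h k y = I2 y - I0 y" for y
  proof (cases "am k y \<le> r")
    case False then show ?thesis by (simp add: I0 I2 Gk_def)
  next
    case True
    define c where "c = am k y"
    have c: "0 \<le> c" "c \<le> r" using True am_nonneg[OF card] by (auto simp: c_def)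
    have inU: "vecf (y(k:=0)) + t *\<^sub>R axis k 1 \<in> U" if "t \<in> {-r..r}" for t
      using sub that True by (auto simp: vec_upd_line[symmetric] cube_upd[OF card] abs_le_iff)
    have dhl: "\<forall>t\<in>{-r..r}. ((\<lambda>t. h (vecf (y(k:=t)))) has_real_derivative partial k h (vecf (y(k:=t)))) (at t)"
      using line_deriv[of U h k "vecf (y(k:=0))"] dh inU by (simp add: vec_upd_line[symmetric])
    have dhl1: "\<forall>t\<in>{-r..r}. ((\<lambda>t. partial k h (vecf (y(k:=t)))) has_real_derivative h2f (vecf (y(k:=t)))) (at t)"
      using line_deriv[of U "partial k h" k "vecf (y(k:=0))"] dh1 inU by (simp add: vec_upd_line[symmetric] h2f_def)
    have ch2l: "continuous_on {-r..r} (\<lambda>t. h2f (vecf (y(k:=t))))" by (rule cont_line[OF card ch2I True])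
    note o = oneD[OF c d0 d1 c2 z dhl dhl1 ch2l]
    have "integral {-r..r} (\<lambda>t. \<psi>0 (r - max \<bar>t\<bar> c) * h2f (vecf (y(k:=t))))
      = integral {-r..r} (\<lambda>t. if c < \<bar>t\<bar> then \<psi>2 (r - \<bar>t\<bar>) * h (vecf (y(k:=t))) else 0) - \<psi>1 (r - c) * (h (vecf (y(k:=c))) + h (vecf (y(k:=-c))))"
      using integral_unique[OF o(1)] .
    then show ?thesis using True by (simp add: I0 I2 Gk_def c_def)
  qed
  have Geq: "Gk r \<psi>1 h k = (\<lambda>y. I2 y - I0 y)" using G by auto
  note f0 = fub[OF int0, of k] and f2 = fub[OF int2, of k]
  show "integrable (lebesgue_minus k) (Gk r \<psi>1 h k)"
    unfolding Geq using f0(2) f2(2) by (simp add: I0_def I2_def)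
  have "integral\<^sup>L (lebesgue_minus k) (Gk r \<psi>1 h k) = integral\<^sup>L lborel F2 - integral\<^sup>L lborel F0"
    unfolding Geq using f0 f2 by (simp add: I0_def I2_def)
  moreover have "(LINT x:Icube r|lborel. \<psi>0 (r - Mx x) * partial k (partial k h) x) = integral\<^sup>L lborel F0"
    by (simp add: set_lebesgue_integral_def F0_def h2f_def)
  moreover have "(LINT x:(Icube r \<inter> Ek k)|lborel. \<psi>2 (r - Mx x) * h x) = integral\<^sup>L lborel F2"
    by (simp add: set_lebesgue_integral_def F2_def)
  ultimately show "(LINT x:Icube r|lborel. \<psi>0 (r - Mx x) * partial k (partial k h) x)
          = (LINT x:(Icube r \<inter> Ek k)|lborel. \<psi>2 (r - Mx x) * h x) - integral\<^sup>L (lebesgue_minus k) (Gk r \<psi>1 h k)"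
    by simp
qed


lemma upd_space:
  assumes "x \<in> space (PiM (I - {j}) (\<lambda>_. lborel :: real measure))" "j \<in> I"
  shows "x(j:=t) \<in> space (PiM I (\<lambda>_. lborel :: real measure))"
  using assms by (auto simp: space_PiM PiE_def extensional_def)

lemma null_tie:
  assumes I: "finite I" "j \<in> I" "l \<in> I" "j \<noteq> l"
  shows "AE y in PiM I (\<lambda>_. lborel :: real measure). \<bar>y j\<bar> \<noteq> \<bar>y l\<bar>"
proof -
  interpret product_sigma_finite "\<lambda>_::'a. lborel :: real measure" by (rule psf)
  define N where "N = {y \<in> space (PiM I (\<lambda>_. lborel :: real measure)). \<bar>y j\<bar> = \<bar>y l\<bar>}"
  have Nm[measurable]: "N \<in> sets (PiM I (\<lambda>_. lborel))"
    unfolding N_def using I by measurable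
  have II: "I = insert j (I - {j})" using I by auto
  have "emeasure (PiM I (\<lambda>_. lborel)) N = (\<integral>\<^sup>+ y. indicator N y \<partial>PiM I (\<lambda>_. lborel))"
    by simp
  also have "\<dots> = (\<integral>\<^sup>+ y. indicator N y \<partial>PiM (insert j (I - {j})) (\<lambda>_. lborel))"
    using II by metis
  also have "\<dots> = (\<integral>\<^sup>+ x. (\<integral>\<^sup>+ t. indicator N (x(j := t)) \<partial>lborel) \<partial>PiM (I - {j}) (\<lambda>_. lborel))"
  proof (rule product_nn_integral_insert)
    show "indicator N \<in> borel_measurable (PiM (insert j (I - {j})) (\<lambda>_. lborel))"
      using Nm II by (metis borel_measurable_indicator)
  qed (use I in auto)
  also have "\<dots> = (\<integral>\<^sup>+ x. 0 \<partial>PiM (I - {j}) (\<lambda>_. lborel :: real measure))"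
  proof (rule nn_integral_cong)
    fix x assume x: "x \<in> space (PiM (I - {j}) (\<lambda>_. lborel :: real measure))"
    have "(\<integral>\<^sup>+ t. indicator N (x(j := t)) \<partial>lborel) = (\<integral>\<^sup>+ t. indicator {x l, - x l} t \<partial>lborel)"
      using upd_space[OF x I(2)] I(4) by (intro nn_integral_cong) (auto simp: N_def indicator_def abs_eq_iff)
    also have "\<dots> = 0" using null_setsD1[OF finite_imp_null_set_lborel[of "{x l, - x l}"]] by simp
    finally show "(\<integral>\<^sup>+ t. indicator N (x(j := t)) \<partial>lborel) = 0" .
  qed
  finally have "N \<in> null_sets (PiM I (\<lambda>_. lborel))" using Nm by auto
  then show ?thesis by (rule AE_I') (auto simp: N_def)
qed

lemma AE_distinct:
  assumes "finite I"
  shows "AE y in PiM I (\<lambda>_. lborel :: real measure). \<forall>a\<in>I. \<forall>b\<in>I. a \<noteq> b \<longrightarrow> \<bar>y a\<bar> \<noteq> \<bar>y b\<bar>"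
proof (intro AE_finite_allI assms)
  fix a b assume "a \<in> I" "b \<in> I"
  then show "AE y in PiM I (\<lambda>_. lborel :: real measure). a \<noteq> b \<longrightarrow> \<bar>y a\<bar> \<noteq> \<bar>y b\<bar>"
    using null_tie[OF assms, of a b] by (cases "a = b") auto
qed

lemma AE_distinct_lborel:
  "AE x in (lborel :: (real^'n::finite) measure). \<forall>a b. a \<noteq> b \<longrightarrow> \<bar>x$a\<bar> \<noteq> \<bar>x$b\<bar>"
proof -
  have "AE y in PP. \<forall>a\<in>UNIV. \<forall>b\<in>UNIV. a \<noteq> b \<longrightarrow> \<bar>y a\<bar> \<noteq> \<bar>(y::'n\<Rightarrow>real) b\<bar>"
    by (rule AE_distinct) simp
  then have "AE y in PP. \<forall>a b. a \<noteq> b \<longrightarrow> \<bar>vecf y $ a\<bar> \<noteq> \<bar>(vecf y :: real^'n) $ b\<bar>" by simp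
  then show ?thesis
    by (subst lborel_vec, subst AE_distr_iff) (auto)
qed

lemma sum_Ek:
  fixes x :: "real^'n::finite"
  assumes "\<forall>a b. a \<noteq> b \<longrightarrow> \<bar>x$a\<bar> \<noteq> \<bar>x$b\<bar>"
  shows "(\<Sum>k\<in>UNIV. indicator (Ek k) x) = (1::real)"
proof -
  have "Mx x \<in> range (\<lambda>i. \<bar>x$i\<bar>)" unfolding Mx_def by (rule Max_in) auto
  then obtain k0 where k0: "\<bar>x$k0\<bar> = Mx x" by auto
  have "indicator (Ek k) x = (if k = k0 then 1 else (0::real))" for k
  proof (cases "k = k0")
    case True
    have "\<bar>x$l\<bar> < \<bar>x$k\<bar>" if "l \<noteq> k" for l
    proof -
      have "\<bar>x$l\<bar> \<le> \<bar>x$k\<bar>" using Mx_ge[of x l] k0 True by simp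
      moreover have "\<bar>x$l\<bar> \<noteq> \<bar>x$k\<bar>" using assms that by blast
      ultimately show ?thesis by simp
    qed
    then have "x \<in> Ek k" unfolding Ek_def by auto
    then show ?thesis using True by simp
  next
    case False
    then have "x \<notin> Ek k" using k0 Mx_ge[of x k] unfolding Ek_def by force
    then show ?thesis using False by simp
  qed
  then show ?thesis by simp
qed

lemma step3:
  fixes F :: "real^'n::finite \<Rightarrow> real"
  assumes "continuous_on (Icube r) F"
  shows "(\<Sum>k\<in>UNIV. LINT x:(Icube r \<inter> Ek k)|lborel. F x) = (LINT x:Icube r|lborel. F x)"
proof -
  have int: "integrable lborel (\<lambda>x. indicator (Icube r \<inter> Ek k) x * F x)" for k
    by (rule int_cube[OF assms Ek_sets])
  have int1: "integrable lborel (\<lambda>x. indicator (Icube r) x * F x)"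
    using int_cube[OF assms, of UNIV] by simp
  have "(\<Sum>k\<in>UNIV. LINT x:(Icube r \<inter> Ek k)|lborel. F x) = (\<Sum>k\<in>UNIV. \<integral>x. indicator (Icube r \<inter> Ek k) x * F x \<partial>lborel)"
    by (simp add: set_lebesgue_integral_def)
  also have "\<dots> = (\<integral>x. (\<Sum>k\<in>UNIV. indicator (Icube r \<inter> Ek k) x * F x) \<partial>lborel)"
    by (rule Bochner_Integration.integral_sum[where I=UNIV and M=lborel and f="\<lambda>k x. indicator (Icube r \<inter> Ek k) x * F x", symmetric]) (rule int)
  also have "\<dots> = (\<integral>x. indicator (Icube r) x * F x \<partial>lborel)"
  proof (rule integral_cong_AE)
    show "(\<lambda>x. \<Sum>k\<in>UNIV. indicator (Icube r \<inter> Ek k) x * F x) \<in> borel_measurable lborel"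
      using int by (intro borel_measurable_sum) auto
    show "(\<lambda>x. indicator (Icube r) x * F x) \<in> borel_measurable lborel" using int1 by auto
    show "AE x in lborel. (\<Sum>k\<in>UNIV. indicator (Icube r \<inter> Ek k) x * F x) = indicator (Icube r) x * F x"
      using AE_distinct_lborel
    proof (rule eventually_mono)
      fix x :: "real^'n" assume d: "\<forall>a b. a \<noteq> b \<longrightarrow> \<bar>x$a\<bar> \<noteq> \<bar>x$b\<bar>"
      have "(\<Sum>k\<in>UNIV. indicator (Icube r \<inter> Ek k) x * F x) = (\<Sum>k\<in>UNIV. (indicator (Icube r) x * F x) * indicator (Ek k) x)"
        by (intro sum.cong refl) (simp add: indicator_inter_arith)
      also have "\<dots> = (indicator (Icube r) x * F x) * (\<Sum>k\<in>UNIV. indicator (Ek k) x)"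
        by (rule sum_distrib_left[symmetric])
      also have "\<dots> = indicator (Icube r) x * F x" using sum_Ek[OF d] by simp
      finally show "(\<Sum>k\<in>UNIV. indicator (Icube r \<inter> Ek k) x * F x) = indicator (Icube r) x * F x" .
    qed
  qed
  also have "\<dots> = (LINT x:Icube r|lborel. F x)" by (simp add: set_lebesgue_integral_def)
  finally show ?thesis .
qed


lemma lift_vec: "lift i j \<sigma> y = vecf (y(i := \<sigma> * y j))"
  by (auto simp: lift_def vec_eq_iff)

lemma lift_vec2: "lift i j \<sigma> y = vecf (\<lambda>l. if l = i then \<sigma> * y j else y l)"
  by (auto simp: lift_def vec_eq_iff)

lemma meas_lift[measurable]:
  assumes "j \<noteq> i"
  shows "(\<lambda>y. lift i j \<sigma> y) \<in> borel_measurable (lebesgue_minus i)"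
  unfolding lift_vec2 lebesgue_minus_def
proof (rule measurable_vec)
  fix l
  have jj: "j \<in> UNIV - {i}" using assms by simp
  show "(\<lambda>y. if l = i then \<sigma> * y j else y l) \<in> borel_measurable (PiM (UNIV - {i}) (\<lambda>_. lborel))"
  proof (cases "l = i")
    case True then show ?thesis using jj by simp measurable
  next
    case False then have "l \<in> UNIV - {i}" by simp
    then show ?thesis using False by simp measurable
  qed
qed

lemma Dij_sub: "Dij r i j \<subseteq> Icube r" by (auto simp: Dij_def)

lemma Dij_sym: "Dij r j i = Dij r i j" by (auto simp: Dij_def)

lemma int_lift:
  fixes H :: "real^'n::finite \<Rightarrow> real"
  assumes ji: "j \<noteq> i" and cH: "continuous_on (Icube r) H" and r: "r > 0"
  shows "integrable (lebesgue_minus i) (\<lambda>y. indicator (Dij r i j) (lift i j \<sigma> y) * H (lift i j \<sigma> y))"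
proof -
  interpret product_sigma_finite "\<lambda>_::'n. lborel :: real measure" by (rule psf)
  have "compact (H ` Icube r)" by (rule compact_continuous_image[OF cH compact_Icube])
  then obtain a where a: "\<forall>x\<in>Icube r. \<bar>H x\<bar> \<le> a" using compact_imp_bounded bounded_real by force
  define B where "B = max a 0"
  have B: "\<forall>x\<in>Icube r. \<bar>H x\<bar> \<le> B" "B \<ge> 0" using a by (auto simp: B_def)
  define A where "A = PiE (UNIV - {i}) (\<lambda>_. {-r..r})"
  have Am[measurable]: "A \<in> sets (lebesgue_minus i)" unfolding A_def lebesgue_minus_def
    by (rule sets_PiM_I_finite) auto
  have "emeasure (lebesgue_minus i) A = (\<Prod>l\<in>UNIV - {i}. emeasure lborel {-r..r})"
    unfolding A_def lebesgue_minus_def by (rule emeasure_PiM) auto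
  also have "\<dots> = (\<Prod>l\<in>UNIV - {i}. ennreal (2 * r))" using r by simp
  also have "\<dots> = ennreal ((2 * r) ^ card (UNIV - {i}))" using r by (simp add: prod_ennreal ennreal_power)
  finally have Afin: "emeasure (lebesgue_minus i) A < \<infinity>" by simp
  define Z where "Z = (\<lambda>x. indicator (Dij r i j) x * (indicator (Icube r) x * H x))"
  have Zm: "Z \<in> borel_measurable borel"
  proof -
    have "(\<lambda>x. indicator (Icube r) x *\<^sub>R H x) \<in> borel_measurable borel"
      by (rule borel_measurable_continuous_on_indicator[OF Icube_sets cH])
    then show ?thesis unfolding Z_def by simp
  qed
  have Zeq: "indicator (Dij r i j) x * H x = Z x" for x
    using Dij_sub[of r i j] by (auto simp: Z_def indicator_def)
  show ?thesis
    unfolding Zeq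
  proof (rule integrableI_bounded_set[where A=A and B=B])
    show "(\<lambda>y. Z (lift i j \<sigma> y)) \<in> borel_measurable (lebesgue_minus i)"
      using measurable_compose[OF meas_lift[OF ji] Zm] .
    show "AE y in lebesgue_minus i. y \<in> A \<longrightarrow> norm (Z (lift i j \<sigma> y)) \<le> B"
      using B Dij_sub[of r i j] by (auto simp: Z_def indicator_def)
    show "AE y in lebesgue_minus i. y \<notin> A \<longrightarrow> Z (lift i j \<sigma> y) = 0"
    proof (rule AE_I2, rule impI)
      fix y assume y: "y \<in> space (lebesgue_minus i)" "y \<notin> A"
      have "\<not> (\<forall>l\<in>UNIV-{i}. y l \<in> {-r..r})"
        using y by (auto simp: A_def lebesgue_minus_def space_PiM PiE_iff)
      then obtain l where l: "l \<noteq> i" "y l \<notin> {-r..r}" by auto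
      then have "lift i j \<sigma> y \<notin> Icube r" by (auto simp: Icube_def lift_def abs_le_iff)
      then show "Z (lift i j \<sigma> y) = 0" by (simp add: Z_def)
    qed
  qed (use Am Afin in auto)
qed


lemma sum_pm: "(\<Sum>\<sigma>\<in>{-1, 1::real}. f \<sigma>) = f (-1) + f 1"
  by (subst sum.insert) auto

lemma abs_sigma: "\<sigma> \<in> {-1, 1::real} \<Longrightarrow> \<bar>\<sigma> * a\<bar> = \<bar>a\<bar>" by auto

lemma lift_nth[simp]: "lift i j \<sigma> y $ l = (if l = i then \<sigma> * y j else y l)"
  by (simp add: lift_def)

lemma lift_in_D:
  assumes card: "CARD('n::finite) \<ge> 2" and ji: "j \<noteq> (i::'n)" and s: "\<sigma> \<in> {-1, 1::real}"
  shows "lift i j \<sigma> y \<in> Dij r i j \<longleftrightarrow> am i y \<le> r \<and> \<bar>y j\<bar> = am i y"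
proof
  define v where "v = lift i j \<sigma> y"
  assume D: "lift i j \<sigma> y \<in> Dij r i j"
  then have D1: "\<forall>l. \<bar>v$l\<bar> \<le> r" and D3: "\<forall>k. k \<noteq> i \<and> k \<noteq> j \<longrightarrow> \<bar>v$k\<bar> \<le> \<bar>v$i\<bar>"
    unfolding Dij_def Icube_def v_def by blast+
  have vi: "\<bar>v$i\<bar> = \<bar>y j\<bar>" using abs_sigma[OF s] by (simp add: v_def)
  have c: "\<bar>y l\<bar> \<le> r" if "l \<noteq> i" for l
    using D1 that by (auto simp: v_def elim!: allE[of _ l])
  have o: "\<bar>y l\<bar> \<le> \<bar>y j\<bar>" if "l \<noteq> i" for l
  proof (cases "l = j")
    case False
    then have "\<bar>v$l\<bar> \<le> \<bar>v$i\<bar>" using D3 that by blast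
    then show ?thesis using vi that by (simp add: v_def)
  qed simp
  have "am i y \<le> \<bar>y j\<bar>" using o am_le_iff[OF card] by blast
  moreover have "\<bar>y j\<bar> \<le> am i y" using am_ge ji by blast
  moreover have "am i y \<le> r" using c am_le_iff[OF card] by blast
  ultimately show "am i y \<le> r \<and> \<bar>y j\<bar> = am i y" by simp
next
  define v where "v = lift i j \<sigma> y"
  assume a: "am i y \<le> r \<and> \<bar>y j\<bar> = am i y"
  have g: "\<bar>y l\<bar> \<le> am i y" if "l \<noteq> i" for l using am_ge that by blast
  have vi: "\<bar>v$i\<bar> = am i y" using abs_sigma[OF s] a by (simp add: v_def)
  have vl: "\<bar>v$l\<bar> \<le> am i y" for l
  proof (cases "l = i")
    case True then show ?thesis using vi by simp
  next
    case False then show ?thesis using g[OF False] by (simp add: v_def)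
  qed
  have "v \<in> Icube r" unfolding Icube_def using vl a by (auto intro: order_trans)
  moreover have "\<bar>v$i\<bar> = \<bar>v$j\<bar>" using vi a ji by (simp add: v_def)
  moreover have "\<forall>k. k \<noteq> i \<and> k \<noteq> j \<longrightarrow> \<bar>v$k\<bar> \<le> \<bar>v$i\<bar>" using vl vi by simp
  ultimately show "lift i j \<sigma> y \<in> Dij r i j" unfolding Dij_def v_def by blast
qed

lemma integral_Dij_eq:
  "integral_Dij r i j H = (\<Sum>\<sigma>\<in>{-1, 1::real}. \<integral>y. indicator (Dij r i j) (lift i j \<sigma> y) * H (lift i j \<sigma> y) \<partial>lebesgue_minus i)"
  unfolding integral_Dij_def set_lebesgue_integral_def
  by (intro sum.cong refl Bochner_Integration.integral_cong) (auto simp: indicator_def)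

lemma sum_sigma:
  fixes h :: "real^'n::finite \<Rightarrow> real"
  assumes card: "CARD('n) \<ge> 2" and ji: "j \<noteq> i"
  shows "(\<Sum>\<sigma>\<in>{-1, 1::real}. indicator (Dij r i j) (lift i j \<sigma> y) * (p (r - Mx (lift i j \<sigma> y)) * h (lift i j \<sigma> y)))
       = indicator {y. \<bar>y j\<bar> = am i y} y * Gk r p h i y"
proof (cases "am i y \<le> r \<and> \<bar>y j\<bar> = am i y")
  case False
  have n: "lift i j \<sigma> y \<notin> Dij r i j" if "\<sigma> \<in> {-1, 1}" for \<sigma>
    using lift_in_D[OF card ji that, of y r] False by blast
  have l: "(\<Sum>\<sigma>\<in>{-1, 1::real}. indicator (Dij r i j) (lift i j \<sigma> y) * (p (r - Mx (lift i j \<sigma> y)) * h (lift i j \<sigma> y))) = 0"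
    using n[of "-1"] n[of 1] by (simp add: sum_pm)
  have "indicator {y. \<bar>y j\<bar> = am i y} y * Gk r p h i y = 0"
    using False unfolding Gk_def indicator_def by auto
  then show ?thesis using l by simp
next
  case True
  have M: "Mx (lift i j \<sigma> y) = am i y" if "\<sigma> \<in> {-1, 1}" for \<sigma>
    using True abs_sigma[OF that] by (simp add: lift_vec Mx_upd[OF card])
  have "(\<Sum>\<sigma>\<in>{-1, 1::real}. indicator (Dij r i j) (lift i j \<sigma> y) * (p (r - Mx (lift i j \<sigma> y)) * h (lift i j \<sigma> y)))
      = p (r - am i y) * h (vecf (y(i := - y j))) + p (r - am i y) * h (vecf (y(i := y j)))"
    using True lift_in_D[OF card ji, of _ y r] M by (simp add: lift_vec)
  also have "\<dots> = indicator {y. \<bar>y j\<bar> = am i y} y * Gk r p h i y"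
  proof -
    have "y j = am i y \<or> y j = - am i y" using True by linarith
    then show ?thesis
    proof
      assume e: "y j = am i y"
      show ?thesis using True e by (simp add: Gk_def indicator_def algebra_simps)
    next
      assume e: "y j = - am i y"
      show ?thesis using True e by (simp add: Gk_def indicator_def algebra_simps)
    qed
  qed
  finally show ?thesis .
qed


lemma step4:
  fixes h :: "real^'n::finite \<Rightarrow> real"
  assumes card: "CARD('n) \<ge> 2" and r: "r > 0"
    and cH: "continuous_on (Icube r) (\<lambda>x. \<psi>1 (r - Mx x) * h x)"
    and intG: "integrable (lebesgue_minus i) (Gk r \<psi>1 h i)"
  shows "integral\<^sup>L (lebesgue_minus i) (Gk r \<psi>1 h i) = (\<Sum>j\<in>UNIV-{i}. integral_Dij r i j (\<lambda>x. \<psi>1 (r - Mx x) * h x))"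
proof -
  define H where "H = (\<lambda>x. \<psi>1 (r - Mx x) * h x)"
  define T where "T = (\<lambda>j \<sigma> y. indicator (Dij r i j) (lift i j \<sigma> y) * H (lift i j \<sigma> y))"
  define S where "S = (\<lambda>j y. indicator {y. \<bar>y j\<bar> = am i y} y * Gk r \<psi>1 h i y)"
  have intT: "integrable (lebesgue_minus i) (T j \<sigma>)" if "j \<in> UNIV - {i}" for j \<sigma>
    unfolding T_def H_def using int_lift[where j=j and i=i and r=r and \<sigma>=\<sigma>] that cH r by auto
  have TS: "(\<lambda>y. \<Sum>\<sigma>\<in>{-1, 1::real}. T j \<sigma> y) = S j" if "j \<in> UNIV - {i}" for j
    using sum_sigma[OF card, where j=j and i=i and r=r and p=\<psi>1 and h=h] that unfolding T_def S_def H_def by auto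
  have intS: "integrable (lebesgue_minus i) (S j)" if "j \<in> UNIV - {i}" for j
  proof -
    have "integrable (lebesgue_minus i) (\<lambda>y. \<Sum>\<sigma>\<in>{-1, 1::real}. T j \<sigma> y)"
      using intT[OF that] by auto
    then show ?thesis using TS[OF that] by simp
  qed
  have "(\<Sum>j\<in>UNIV-{i}. integral_Dij r i j H) = (\<Sum>j\<in>UNIV-{i}. \<Sum>\<sigma>\<in>{-1, 1::real}. integral\<^sup>L (lebesgue_minus i) (T j \<sigma>))"
    by (simp add: integral_Dij_eq T_def)
  also have "\<dots> = (\<Sum>j\<in>UNIV-{i}. integral\<^sup>L (lebesgue_minus i) (\<lambda>y. \<Sum>\<sigma>\<in>{-1, 1::real}. T j \<sigma> y))"
    by (intro sum.cong refl Bochner_Integration.integral_sum[symmetric] intT) auto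
  also have "\<dots> = (\<Sum>j\<in>UNIV-{i}. integral\<^sup>L (lebesgue_minus i) (S j))"
  proof (rule sum.cong[OF refl])
    fix j assume j: "j \<in> UNIV - {i}"
    show "integral\<^sup>L (lebesgue_minus i) (\<lambda>y. \<Sum>\<sigma>\<in>{-1, 1::real}. T j \<sigma> y) = integral\<^sup>L (lebesgue_minus i) (S j)"
      by (simp only: TS[OF j])
  qed
  also have "\<dots> = integral\<^sup>L (lebesgue_minus i) (\<lambda>y. \<Sum>j\<in>UNIV-{i}. S j y)"
    by (rule Bochner_Integration.integral_sum[symmetric]) (rule intS)
  also have "\<dots> = integral\<^sup>L (lebesgue_minus i) (Gk r \<psi>1 h i)"
  proof (rule integral_cong_AE)
    show "(\<lambda>y. \<Sum>j\<in>UNIV-{i}. S j y) \<in> borel_measurable (lebesgue_minus i)"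
      using intS by (intro borel_measurable_sum) auto
    show "Gk r \<psi>1 h i \<in> borel_measurable (lebesgue_minus i)" using intG by auto
    have "AE y in lebesgue_minus i. \<forall>a\<in>UNIV-{i}. \<forall>b\<in>UNIV-{i}. a \<noteq> b \<longrightarrow> \<bar>y a\<bar> \<noteq> \<bar>y b\<bar>"
      unfolding lebesgue_minus_def by (rule AE_distinct) simp
    then show "AE y in lebesgue_minus i. (\<Sum>j\<in>UNIV-{i}. S j y) = Gk r \<psi>1 h i y"
    proof (rule eventually_mono)
      fix y :: "'n \<Rightarrow> real" assume d: "\<forall>a\<in>UNIV-{i}. \<forall>b\<in>UNIV-{i}. a \<noteq> b \<longrightarrow> \<bar>y a\<bar> \<noteq> \<bar>y b\<bar>"
      obtain j0 where j0: "j0 \<noteq> i" "\<bar>y j0\<bar> = am i y" using am_attained[OF card] by blast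
      have "S j y = (if j = j0 then Gk r \<psi>1 h i y else 0)" if "j \<in> UNIV - {i}" for j
      proof (cases "j = j0")
        case True then show ?thesis using j0 by (simp add: S_def)
      next
        case False
        have "\<bar>y j\<bar> \<noteq> \<bar>y j0\<bar>" using d that j0(1) False by blast
        then have "\<bar>y j\<bar> \<noteq> am i y" using j0(2) by simp
        then show ?thesis using False by (simp add: S_def)
      qed
      then have "(\<Sum>j\<in>UNIV-{i}. S j y) = (\<Sum>j\<in>UNIV-{i}. if j = j0 then Gk r \<psi>1 h i y else 0)"
        by (intro sum.cong) auto
      also have "\<dots> = Gk r \<psi>1 h i y" using j0 by (simp add: sum.delta')
      finally show "(\<Sum>j\<in>UNIV-{i}. S j y) = Gk r \<psi>1 h i y" .
    qed
  qed
  finally show ?thesis unfolding H_def by simp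
qed

lemma lift_upd1:
  assumes "i \<noteq> j"
  shows "lift i j \<sigma> (w(j:=t)) = vecf (\<lambda>l. if l = i then \<sigma> * t else if l = j then t else w l)"
  using assms by (auto simp: vec_eq_iff)

lemma lift_upd2:
  assumes "i \<noteq> j"
  shows "lift j i \<sigma> (w(i:=t)) = vecf (\<lambda>l. if l = j then \<sigma> * t else if l = i then t else w l)"
  using assms by (auto simp: vec_eq_iff)

lemma sym_Dij:
  fixes H :: "real^'n::finite \<Rightarrow> real"
  assumes ji: "j \<noteq> i" and cH: "continuous_on (Icube r) H" and r: "r > 0"
  shows "integral_Dij r i j H = integral_Dij r j i H"
proof -
  interpret product_sigma_finite "\<lambda>_::'n. lborel :: real measure" by (rule psf)
  define W where "W = UNIV - {i} - {j}"
  have Wi: "UNIV - {i} = insert j W" "j \<notin> W" and Wj: "UNIV - {j} = insert i W" "i \<notin> W"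
    using ji by (auto simp: W_def)
  define Z where "Z = (\<lambda>x. indicator (Dij r i j) x * H x)"
  have key: "(\<integral>y. Z (lift i j \<sigma> y) \<partial>lebesgue_minus i) = (\<integral>y. Z (lift j i \<sigma> y) \<partial>lebesgue_minus j)"
    if s: "\<sigma> \<in> {-1, 1}" for \<sigma>
  proof -
    have int1: "integrable (PiM (insert j W) (\<lambda>_. lborel)) (\<lambda>y. Z (lift i j \<sigma> y))"
      using int_lift[OF ji cH r, of \<sigma>] Wi(1) unfolding lebesgue_minus_def Z_def by simp
    have int2: "integrable (PiM (insert i W) (\<lambda>_. lborel)) (\<lambda>y. Z (lift j i \<sigma> y))"
      using int_lift[where j=i and i=j and H=H and r=r and \<sigma>=\<sigma>] ji cH r Wj(1) unfolding lebesgue_minus_def Z_def by (simp add: Dij_sym)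
    have e1: "(\<integral>y. Z (lift i j \<sigma> y) \<partial>lebesgue_minus i) = (\<integral>w. (\<integral>t. Z (lift i j \<sigma> (w(j:=t))) \<partial>lborel) \<partial>PiM W (\<lambda>_. lborel))"
      unfolding lebesgue_minus_def Wi(1) by (rule product_integral_insert[OF _ Wi(2) int1]) simp
    have e2: "(\<integral>y. Z (lift j i \<sigma> y) \<partial>lebesgue_minus j) = (\<integral>w. (\<integral>t. Z (lift j i \<sigma> (w(i:=t))) \<partial>lborel) \<partial>PiM W (\<lambda>_. lborel))"
      unfolding lebesgue_minus_def Wj(1) by (rule product_integral_insert[OF _ Wj(2) int2]) simp
    have inner: "(\<integral>t. Z (lift i j \<sigma> (w(j:=t))) \<partial>lborel) = (\<integral>t. Z (lift j i \<sigma> (w(i:=t))) \<partial>lborel)" for w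
    proof -
      have ij: "i \<noteq> j" using ji by simp
      show ?thesis
      proof (cases "\<sigma> = 1")
        case True
        have "lift i j \<sigma> (w(j:=t)) = lift j i \<sigma> (w(i:=t))" for t
          using True ij by (auto simp: vec_eq_iff)
        then show ?thesis by simp
      next
        case False
        then have m: "\<sigma> = -1" using s by auto
        have "(\<integral>t. Z (lift i j \<sigma> (w(j:=t))) \<partial>lborel) = (\<integral>t. Z (vecf (\<lambda>l. if l = i then - t else if l = j then t else w l)) \<partial>lborel)"
          by (simp add: lift_upd1[OF ij] m cong: if_cong)
        also have "\<dots> = \<bar>-1\<bar> *\<^sub>R (\<integral>x. Z (vecf (\<lambda>l. if l = i then - (0 + -1 * x) else if l = j then (0 + -1 * x) else w l)) \<partial>lborel)"
          by (rule lborel_integral_real_affine) simp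
        also have "\<dots> = (\<integral>x. Z (vecf (\<lambda>l. if l = j then - x else if l = i then x else w l)) \<partial>lborel)"
        proof -
          have "vecf (\<lambda>l. if l = i then - (0 + -1 * x) else if l = j then (0 + -1 * x) else w l) = (vecf (\<lambda>l. if l = j then - x else if l = i then x else w l) :: real^'n)" for x
            using ij by (auto simp: vec_eq_iff)
          then show ?thesis by simp
        qed
        also have "\<dots> = (\<integral>t. Z (lift j i \<sigma> (w(i:=t))) \<partial>lborel)"
          by (simp add: lift_upd2[OF ij] m cong: if_cong)
        finally show ?thesis .
      qed
    qed
    show ?thesis unfolding e1 e2 inner ..
  qed
  have "integral_Dij r i j H = (\<Sum>\<sigma>\<in>{-1, 1::real}. \<integral>y. Z (lift i j \<sigma> y) \<partial>lebesgue_minus i)"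
    by (simp add: integral_Dij_eq Z_def)
  also have "\<dots> = (\<Sum>\<sigma>\<in>{-1, 1::real}. \<integral>y. Z (lift j i \<sigma> y) \<partial>lebesgue_minus j)"
    using key by (simp add: sum_pm)
  also have "\<dots> = integral_Dij r j i H"
    by (simp add: integral_Dij_eq Z_def Dij_sym)
  finally show ?thesis .
qed


lemma sum_filt: "(\<Sum>j\<in>{j. P j}. g j) = (\<Sum>j\<in>(UNIV::'a::finite set). if P j then g j else 0)"
  using sum.inter_filter[of UNIV g P] by simp

lemma sum_pairs:
  fixes f :: "'n::{finite,linorder} \<Rightarrow> 'n \<Rightarrow> real"
  assumes sym: "\<And>k j. k \<noteq> j \<Longrightarrow> f k j = f j k"
  shows "(\<Sum>k\<in>UNIV. \<Sum>j\<in>UNIV-{k}. f k j) = 2 * (\<Sum>k\<in>UNIV. \<Sum>j\<in>{j. k<j}. f k j)"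
proof -
  have split: "(\<Sum>j\<in>UNIV-{k}. f k j) = (\<Sum>j\<in>{j. k<j}. f k j) + (\<Sum>j\<in>{j. j<k}. f k j)" for k
  proof -
    have e: "UNIV - {k} = {j. k<j} \<union> {j. j<k}" by auto
    have "sum (f k) ({j. k<j} \<union> {j. j<k}) = sum (f k) {j. k<j} + sum (f k) {j. j<k}"
      by (rule sum.union_disjoint) auto
    then show ?thesis using e by simp
  qed
  have "(\<Sum>k\<in>UNIV. \<Sum>j\<in>{j. j<k}. f k j) = (\<Sum>k\<in>UNIV. \<Sum>j\<in>UNIV. if j < k then f k j else 0)"
    by (simp only: sum_filt)
  also have "\<dots> = (\<Sum>j\<in>UNIV. \<Sum>k\<in>UNIV. if j < k then f k j else 0)"
    by (rule sum.swap)
  also have "\<dots> = (\<Sum>j\<in>UNIV. \<Sum>k\<in>{k. j<k}. f j k)"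
    unfolding sum_filt by (intro sum.cong refl) (auto simp: sym)
  finally have "(\<Sum>k\<in>UNIV. \<Sum>j\<in>{j. j<k}. f k j) = (\<Sum>k\<in>UNIV. \<Sum>j\<in>{j. k<j}. f k j)" .
  then show ?thesis by (simp add: split sum.distrib)
qed

lemma green:
  fixes h :: "real^'n::{finite,linorder} \<Rightarrow> real" and \<psi>0 \<psi>1 \<psi>2 :: "real \<Rightarrow> real"
  assumes card: "CARD('n) \<ge> 2" and r: "r > 0" and sub: "Icube r \<subseteq> U" and hC: "Ck 2 h U"
  and d0: "\<forall>t\<in>{0..r}. (\<psi>0 has_real_derivative \<psi>1 t) (at t within {0..r})"
  and d1: "\<forall>t\<in>{0..r}. (\<psi>1 has_real_derivative \<psi>2 t) (at t within {0..r})"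
  and c2: "continuous_on {0..r} \<psi>2"
  and z: "\<psi>0 0 = 0" "\<psi>1 0 = 0"
  shows "(LINT x:Icube r|lborel. \<psi>2 (r - Mx x) * h x)
       = (LINT x:Icube r|lborel. \<psi>0 (r - Mx x) * laplacian h x) + 2 * integral_Dn r (\<lambda>x. \<psi>1 (r - Mx x) * h x)"
proof -
  have hC': "Ck (Suc (Suc 0)) h U" using hC by (simp add: numeral_2_eq_2)
  have ch: "continuous_on U h" and ch2: "\<And>k. continuous_on U (partial k (partial k h))"
    using hC' by auto
  have cp0: "continuous_on {0..r} \<psi>0" using d0 by (intro DERIV_continuous_on) auto
  have cp1: "continuous_on {0..r} \<psi>1" using d1 by (intro DERIV_continuous_on) auto
  have chI: "continuous_on (Icube r) h" using continuous_on_subset[OF ch sub] .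
  define H where "H = (\<lambda>x. \<psi>1 (r - Mx x) * h x)"
  have cH: "continuous_on (Icube r) H" unfolding H_def by (rule cont_comp[OF cp1 chI])
  have cF2: "continuous_on (Icube r) (\<lambda>x. \<psi>2 (r - Mx x) * h x)" by (rule cont_comp[OF c2 chI])
  have cPk: "continuous_on (Icube r) (\<lambda>x. \<psi>0 (r - Mx x) * partial k (partial k h) x)" for k
    by (rule cont_comp[OF cp0 continuous_on_subset[OF ch2 sub]])
  note s2 = step2[OF card r sub hC d0 d1 c2 z]
  have "(LINT x:Icube r|lborel. \<psi>0 (r - Mx x) * laplacian h x)
      = (\<integral>x. (\<Sum>k\<in>UNIV. indicator (Icube r \<inter> UNIV) x * (\<psi>0 (r - Mx x) * partial k (partial k h) x)) \<partial>lborel)"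
    unfolding set_lebesgue_integral_def laplacian_def by (simp add: sum_distrib_left)
  also have "\<dots> = (\<Sum>k\<in>UNIV. \<integral>x. indicator (Icube r \<inter> UNIV) x * (\<psi>0 (r - Mx x) * partial k (partial k h) x) \<partial>lborel)"
    by (rule Bochner_Integration.integral_sum) (rule int_cube[OF cPk], simp)
  also have "\<dots> = (\<Sum>k\<in>UNIV. LINT x:Icube r|lborel. \<psi>0 (r - Mx x) * partial k (partial k h) x)"
    by (simp add: set_lebesgue_integral_def)
  also have "\<dots> = (\<Sum>k\<in>UNIV. (LINT x:(Icube r \<inter> Ek k)|lborel. \<psi>2 (r - Mx x) * h x) - integral\<^sup>L (lebesgue_minus k) (Gk r \<psi>1 h k))"
    using s2(2) by simp
  also have "\<dots> = (LINT x:Icube r|lborel. \<psi>2 (r - Mx x) * h x) - (\<Sum>k\<in>UNIV. integral\<^sup>L (lebesgue_minus k) (Gk r \<psi>1 h k))"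
    by (simp add: sum_subtractf step3[OF cF2])
  also have "(\<Sum>k\<in>UNIV. integral\<^sup>L (lebesgue_minus k) (Gk r \<psi>1 h k)) = (\<Sum>k\<in>UNIV. \<Sum>j\<in>UNIV-{k}. integral_Dij r k j H)"
    using step4[OF card r _ s2(1)] cH unfolding H_def by simp
  also have "\<dots> = 2 * integral_Dn r H"
    unfolding integral_Dn_def by (rule sum_pairs) (rule sym_Dij[OF _ cH r], simp)
  finally show ?thesis unfolding H_def by simp
qed


theorem theorem2:
  fixes g :: "real^'n::{finite,linorder} \<Rightarrow> real"
    and U :: "(real^'n::{finite,linorder}) set"
    and r :: real and m :: nat
    and \<phi> :: "real \<Rightarrow> real" and \<Phi> :: "nat \<Rightarrow> real \<Rightarrow> real"
  assumes "CARD('n) \<ge> 2" and "r > 0" and "m \<ge> 1"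
    and "open U" and "connected U" and "Icube r \<subseteq> U"
    and "Ck (2*m) g U"
    and "\<forall>x\<in>U. (laplacian ^^ m) g x = 0"
    and "\<Phi> 0 = \<phi>"
    and "\<forall>k<2*m. \<forall>t\<in>{0..r}. (\<Phi> k has_real_derivative \<Phi> (Suc k) t) (at t within {0..r})"
    and "continuous_on {0..r} (\<Phi> (2*m))"
    and "\<forall>k<2*m. \<Phi> k 0 = 0"
  shows "(LINT x : Icube r | lborel. \<Phi> (2*m) (r - Mx x) * g x)
       = 2 * (\<Sum>s<m. integral_Dn r (\<lambda>x. \<Phi> (2 * s + 1) (r - Mx x) * (laplacian ^^ (m-s-1)) g x))"
proof -
  note card = assms(1) and r = assms(2) and openU = assms(4) and sub = assms(6)
    and gC = assms(7) and harm = assms(8) and dP = assms(10) and cP = assms(11) and zP = assms(12)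
  define T where "T d = (LINT x : Icube r | lborel. \<Phi> (2*d) (r - Mx x) * (laplacian ^^ (m - d)) g x)" for d
  have main: "T d = 2 * (\<Sum>s<d. integral_Dn r (\<lambda>x. \<Phi> (2 * s + 1) (r - Mx x) * (laplacian ^^ (m-s-1)) g x))"
    if "d \<le> m" for d
    using that
  proof (induction d)
    case 0
    have "T 0 = (\<integral>x. indicator (Icube r) x * (\<Phi> 0 (r - Mx x) * (laplacian ^^ m) g x) \<partial>lborel)"
      by (simp add: T_def set_lebesgue_integral_def)
    also have "\<dots> = 0"
    proof -
      have e: "(\<lambda>x. indicator (Icube r) x * (\<Phi> 0 (r - Mx x) * (laplacian ^^ m) g x)) = (\<lambda>x. 0)"
        by (rule ext) (use harm sub in \<open>auto simp: indicator_def\<close>)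
      show ?thesis by (simp only: e) simp
    qed
    finally show ?case by simp
  next
    case (Suc d)
    then have dm: "d < m" by simp
    define h where "h = (laplacian ^^ (m - d - 1)) g"
    have hC0: "Ck (2*(m - (m - d - 1))) h U" unfolding h_def by (rule Ck_lap_pow[OF openU gC]) simp
    have "2*(m - (m - d - 1)) = 2 + 2*d" using dm by simp
    then have hC: "Ck 2 h U" using hC0 Ck_mono[of 2 "2*d" h U] by simp
    have d0: "\<forall>t\<in>{0..r}. (\<Phi> (2*d) has_real_derivative \<Phi> (2*d+1) t) (at t within {0..r})"
    proof -
      have "2*d < 2*m" using dm by simp
      then have "\<forall>t\<in>{0..r}. (\<Phi> (2*d) has_real_derivative \<Phi> (Suc (2*d)) t) (at t within {0..r})"
        using dP by blast
      then show ?thesis by simp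
    qed
    have d1: "\<forall>t\<in>{0..r}. (\<Phi> (2*d+1) has_real_derivative \<Phi> (2*d+2) t) (at t within {0..r})"
    proof -
      have "2*d+1 < 2*m" using dm by simp
      then have "\<forall>t\<in>{0..r}. (\<Phi> (2*d+1) has_real_derivative \<Phi> (Suc (2*d+1)) t) (at t within {0..r})"
        using dP by blast
      then show ?thesis by simp
    qed
    have c2: "continuous_on {0..r} (\<Phi> (2*d+2))"
    proof (cases "d + 1 = m")
      case True
      then have "2*d+2 = 2*m" by simp
      then show ?thesis using cP by simp
    next
      case False
      then have "2*d+2 < 2*m" using dm by simp
      then have "\<forall>t\<in>{0..r}. (\<Phi> (2*d+2) has_real_derivative \<Phi> (Suc (2*d+2)) t) (at t within {0..r})"
        using dP by blast
      then show ?thesis by (intro DERIV_continuous_on) auto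
    qed
    have z: "\<Phi> (2*d) 0 = 0" "\<Phi> (2*d+1) 0 = 0" using zP dm by auto
    note G = green[OF card r sub hC d0 d1 c2 z]
    have lap: "laplacian h = (laplacian ^^ (m - d)) g"
    proof -
      have "m - d = Suc (m - d - 1)" using dm by simp
      then show ?thesis unfolding h_def by (metis comp_apply funpow.simps(2))
    qed
    have "T (Suc d) = (LINT x : Icube r | lborel. \<Phi> (2*d+2) (r - Mx x) * h x)"
      by (simp add: T_def h_def)
    also have "\<dots> = T d + 2 * integral_Dn r (\<lambda>x. \<Phi> (2*d+1) (r - Mx x) * h x)"
      unfolding G lap T_def ..
    also have "\<dots> = 2 * (\<Sum>s<Suc d. integral_Dn r (\<lambda>x. \<Phi> (2 * s + 1) (r - Mx x) * (laplacian ^^ (m-s-1)) g x))"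
      using Suc by (simp add: h_def algebra_simps)
    finally show ?case .
  qed
  have "T m = (LINT x : Icube r | lborel. \<Phi> (2*m) (r - Mx x) * g x)" by (simp add: T_def)
  then show ?thesis using main[of m] by simp
qed


end
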